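(* Let $\mathcal G$ be a family of nonempty subsets of the finite set $\Omega$ that is closed under unions and nonempty intersections and covers $\Omega$, and let $G\in\mathcal G$. Let $\mu_1,\dots,\mu_K$ be the distinct $\mathcal G$-atoms contained in $G$, listed in any order such that $\mu_r\subsetneq\mu_s$ implies $r<s$, and put $U_j=\bigcup_{k=1}^j\mu_k$. Then (i) $G=\bigcup_{k=1}^K\mu_k$; and (ii) for every $j=2,\dots,K$, $U_{j-1}\cap\mu_j=\bigcup\{\mu_r: r<j,\ \mu_r\subsetneq\mu_j\}$.
   Context: The $\mathcal G$-atoms are the sets $m(\omega)=\bigcap\{H\in\mathcal G:\omega\in H\}$ for $\omega\in\Omega$. *)

theory Defs
  imports Main
begin

definition atom :: "'a set set \<Rightarrow> 'a \<Rightarrow> 'a set" where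
  "atom \<G> \<omega> = \<Inter>{H \<in> \<G>. \<omega> \<in> H}"

end

theory Submission
  imports Defs
begin

lemma atom_self: "x \<in> atom \<G> x"
  unfolding atom_def by auto

lemma atom_mono: "x \<in> atom \<G> w \<Longrightarrow> atom \<G> x \<subseteq> atom \<G> w"
  unfolding atom_def by blast

lemma atom_sub: "H \<in> \<G> \<Longrightarrow> x \<in> H \<Longrightarrow> atom \<G> x \<subseteq> H"
  unfolding atom_def by blast

theorem lemma5:
  fixes \<Omega> :: "'a set" and \<G> :: "'a set set" and G :: "'a set"
    and \<mu> :: "nat \<Rightarrow> 'a set" and K :: nat
  assumes fin: "finite \<Omega>"
    and sub: "\<forall>H\<in>\<G>. H \<noteq> {} \<and> H \<subseteq> \<Omega>"
    and un: "\<forall>H1\<in>\<G>. \<forall>H2\<in>\<G>. H1 \<union> H2 \<in> \<G>"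
    and int: "\<forall>H1\<in>\<G>. \<forall>H2\<in>\<G>. H1 \<inter> H2 \<noteq> {} \<longrightarrow> H1 \<inter> H2 \<in> \<G>"
    and cover: "\<Union>\<G> = \<Omega>"
    and G: "G \<in> \<G>"
    and enum: "bij_betw \<mu> {1..K} {atom \<G> \<omega> | \<omega>. \<omega> \<in> \<Omega> \<and> atom \<G> \<omega> \<subseteq> G}"
    and ord: "\<forall>r\<in>{1..K}. \<forall>s\<in>{1..K}. \<mu> r \<subset> \<mu> s \<longrightarrow> r < s"
  shows "G = (\<Union>k\<in>{1..K}. \<mu> k) \<and>
         (\<forall>j\<in>{2..K}. (\<Union>k\<in>{1..j-1}. \<mu> k) \<inter> \<mu> j
                      = \<Union>{\<mu> r | r. 1 \<le> r \<and> r < j \<and> \<mu> r \<subset> \<mu> j})"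
proof -
  have img: "\<mu> ` {1..K} = {atom \<G> \<omega> | \<omega>. \<omega> \<in> \<Omega> \<and> atom \<G> \<omega> \<subseteq> G}"
    using enum by (simp add: bij_betw_def)
  have inj: "inj_on \<mu> {1..K}" using enum by (simp add: bij_betw_def)
  have muG: "\<mu> k \<subseteq> G" if "k \<in> {1..K}" for k
    using img that by blast
  have getk: "\<exists>k\<in>{1..K}. \<mu> k = atom \<G> x" if "x \<in> \<Omega>" "atom \<G> x \<subseteq> G" for x
  proof -
    have "atom \<G> x \<in> \<mu> ` {1..K}" using img that by blast
    then show ?thesis by auto
  qed
  have muatom: "\<exists>w. \<mu> k = atom \<G> w" if "k \<in> {1..K}" for k
    using img that by blast
  have part1: "G = (\<Union>k\<in>{1..K}. \<mu> k)"
  proof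
    show "G \<subseteq> (\<Union>k\<in>{1..K}. \<mu> k)"
    proof
      fix x assume x: "x \<in> G"
      have "x \<in> \<Omega>" using sub G x by blast
      moreover have "atom \<G> x \<subseteq> G" using atom_sub[OF G x] .
      ultimately obtain k where "k \<in> {1..K}" "\<mu> k = atom \<G> x" using getk by blast
      then show "x \<in> (\<Union>k\<in>{1..K}. \<mu> k)" using atom_self[of x \<G>] by blast
    qed
    show "(\<Union>k\<in>{1..K}. \<mu> k) \<subseteq> G" using muG by blast
  qed
  have part2: "(\<Union>k\<in>{1..j-1}. \<mu> k) \<inter> \<mu> j = \<Union>{\<mu> r | r. 1 \<le> r \<and> r < j \<and> \<mu> r \<subset> \<mu> j}"
    if j: "j \<in> {2..K}" for j
  proof
    show "\<Union>{\<mu> r | r. 1 \<le> r \<and> r < j \<and> \<mu> r \<subset> \<mu> j} \<subseteq> (\<Union>k\<in>{1..j-1}. \<mu> k) \<inter> \<mu> j"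
    proof
      fix x assume "x \<in> \<Union>{\<mu> r | r. 1 \<le> r \<and> r < j \<and> \<mu> r \<subset> \<mu> j}"
      then obtain r where r: "1 \<le> r" "r < j" "\<mu> r \<subset> \<mu> j" "x \<in> \<mu> r" by blast
      have "r \<in> {1..j-1}" using r(1,2) by simp
      then show "x \<in> (\<Union>k\<in>{1..j-1}. \<mu> k) \<inter> \<mu> j" using r(3,4) by blast
    qed
    show "(\<Union>k\<in>{1..j-1}. \<mu> k) \<inter> \<mu> j \<subseteq> \<Union>{\<mu> r | r. 1 \<le> r \<and> r < j \<and> \<mu> r \<subset> \<mu> j}"
    proof
      fix x assume "x \<in> (\<Union>k\<in>{1..j-1}. \<mu> k) \<inter> \<mu> j"
      then obtain r where r: "r \<in> {1..j-1}" "x \<in> \<mu> r" and xj: "x \<in> \<mu> j" by blast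
      have rK: "r \<in> {1..K}" and jK: "j \<in> {1..K}" using r j by auto
      obtain wr where wr: "\<mu> r = atom \<G> wr" using muatom[OF rK] by blast
      obtain wj where wj: "\<mu> j = atom \<G> wj" using muatom[OF jK] by blast
      have ar: "atom \<G> x \<subseteq> \<mu> r" using atom_mono r(2) wr by metis
      have aj: "atom \<G> x \<subseteq> \<mu> j" using atom_mono xj wj by metis
      have "x \<in> G" using muG[OF jK] xj by blast
      then have "x \<in> \<Omega>" using sub G by blast
      moreover have "atom \<G> x \<subseteq> G" using aj muG[OF jK] by blast
      ultimately obtain t where t: "t \<in> {1..K}" "\<mu> t = atom \<G> x" using getk by blast
      have "\<mu> t \<noteq> \<mu> j"
      proof
        assume eq: "\<mu> t = \<mu> j"
        then have "\<mu> j \<subseteq> \<mu> r" using ar t by simp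
        moreover have "\<mu> j \<noteq> \<mu> r" 
        proof
          assume "\<mu> j = \<mu> r"
          then have "j = r" using inj_onD[OF inj _ jK rK] by blast
          then show False using r(1) j by auto
        qed
        ultimately have "\<mu> j \<subset> \<mu> r" by blast
        then have "j < r" using ord rK jK by blast
        then show False using r(1) by auto
      qed
      then have "\<mu> t \<subset> \<mu> j" using aj t by blast
      then have "t < j" using ord t jK by blast
      moreover have "x \<in> \<mu> t" using t atom_self by metis
      ultimately show "x \<in> \<Union>{\<mu> r | r. 1 \<le> r \<and> r < j \<and> \<mu> r \<subset> \<mu> j}"
        using t(1) \<open>\<mu> t \<subset> \<mu> j\<close> by (auto simp: atLeastAtMost_iff)
    qed
  qed
  show ?thesis by (intro conjI ballI part1 part2)
qed

end
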